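(* Let $\kappa,\lambda$ be regular cardinals with $\kappa^+<\lambda$, and let $S\subseteq\{\delta<\lambda:\operatorname{cf}\delta=\kappa\}$ be stationary in $\lambda$. Let $\langle c_\delta:\delta\in S\rangle$ be any sequence such that each $c_\delta\subseteq\delta$ is a club of $\delta$ of order type $\kappa$, and let $E'\subseteq\lambda$ be a club. Then there is a club $E\subseteq E'$ such that, setting $c'_\delta=\operatorname{Drop}(c_\delta,E)$ for $\delta\in S$, the following hold: (1) each $c'_\delta$ is a closed subset of $\delta$; (2) for every club $E''\subseteq\lambda$ the set $\{\delta\in S: c'_\delta\subseteq E'',\ \sup c'_\delta=\delta,\ \operatorname{otp}c'_\delta=\kappa\}$ is stationary in $\lambda$.
   Context: For a set of ordinals $c$ and an ordinal $\alpha$: if $c\cap\alpha\neq\emptyset$, $\operatorname{drop}(\alpha,c)=\sup(c\cap\alpha)$; if $c\cap\alpha=\emptyset$, $\operatorname{drop}(\alpha,c)$ is undefined. For sets of ordinals $X,c$, $\operatorname{Drop}(X,c)=\{\operatorname{drop}(\alpha,c):\alpha\in X\}$ (over those $\alpha$ for which it is defined). $\operatorname{otp}$ denotes order type. *)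

theory Defs
  imports Main "HOL-Library.Equipollence"
begin

text \<open>Ordinals are modelled as elements of an arbitrary well-ordered type 'a;
  an element x stands for the ordinal given by the order type of its initial
  segment, and the ordinal x is identified with the set of smaller elements.\<close>

definition osup :: "'a::wellorder set \<Rightarrow> 'a" where
  "osup A = (LEAST x. \<forall>y\<in>A. y \<le> x)"

definition ord_iso :: "'a::wellorder set \<Rightarrow> 'a set \<Rightarrow> bool" where
  "ord_iso A B \<longleftrightarrow> (\<exists>f. bij_betw f A B \<and> strict_mono_on A f)"

definition has_otp :: "'a::wellorder set \<Rightarrow> 'a \<Rightarrow> bool" where
  "has_otp X \<beta> \<longleftrightarrow> ord_iso X {..<\<beta>}"

definition cofinal_in :: "'a::wellorder \<Rightarrow> 'a set \<Rightarrow> bool" where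
  "cofinal_in \<delta> X \<longleftrightarrow> X \<subseteq> {..<\<delta>} \<and> (\<forall>x<\<delta>. \<exists>y\<in>X. x \<le> y)"

definition cf :: "'a::wellorder \<Rightarrow> 'a" where
  "cf \<delta> = (LEAST \<beta>. \<exists>X. cofinal_in \<delta> X \<and> has_otp X \<beta>)"

definition regular_cardinal :: "'a::wellorder \<Rightarrow> bool" where
  "regular_cardinal kap \<longleftrightarrow> infinite {..<kap} \<and> cf kap = kap"

definition closed_in_ord :: "'a::wellorder \<Rightarrow> 'a set \<Rightarrow> bool" where
  "closed_in_ord \<delta> C \<longleftrightarrow> C \<subseteq> {..<\<delta>} \<and>
     (\<forall>\<gamma><\<delta>. C \<inter> {..<\<gamma>} \<noteq> {} \<and> osup (C \<inter> {..<\<gamma>}) = \<gamma> \<longrightarrow> \<gamma> \<in> C)"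

definition club_in :: "'a::wellorder \<Rightarrow> 'a set \<Rightarrow> bool" where
  "club_in \<delta> C \<longleftrightarrow> closed_in_ord \<delta> C \<and> (\<forall>\<beta><\<delta>. \<exists>\<gamma>\<in>C. \<beta> \<le> \<gamma>)"

definition stationary_in :: "'a::wellorder \<Rightarrow> 'a set \<Rightarrow> bool" where
  "stationary_in lam S \<longleftrightarrow> S \<subseteq> {..<lam} \<and> (\<forall>C. club_in lam C \<longrightarrow> S \<inter> C \<noteq> {})"

definition drop_defined :: "'a::wellorder \<Rightarrow> 'a set \<Rightarrow> bool" where
  "drop_defined \<alpha> c \<longleftrightarrow> c \<inter> {..<\<alpha>} \<noteq> {}"

definition drop :: "'a::wellorder \<Rightarrow> 'a set \<Rightarrow> 'a" where
  "drop \<alpha> c = osup (c \<inter> {..<\<alpha>})"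

definition Drop :: "'a::wellorder set \<Rightarrow> 'a set \<Rightarrow> 'a set" where
  "Drop X c = {drop \<alpha> c | \<alpha>. \<alpha> \<in> X \<and> drop_defined \<alpha> c}"

end

theory Submission
  imports Defs
begin


lemma osup_ub: "\<forall>y\<in>A. y \<le> b \<Longrightarrow> y \<in> A \<Longrightarrow> y \<le> osup A"
  unfolding osup_def by (rule LeastI2[of "\<lambda>x. \<forall>y\<in>A. y \<le> x" b]) auto

lemma osup_least: "\<forall>y\<in>A. y \<le> b \<Longrightarrow> osup A \<le> b"
  unfolding osup_def by (rule Least_le) auto

lemma osup_mono: "A \<subseteq> B \<Longrightarrow> \<forall>y\<in>B. y \<le> b \<Longrightarrow> osup A \<le> osup B"
  by (meson osup_least osup_ub subset_iff)

lemma osup_lt: "\<forall>y\<in>A. y \<le> b \<Longrightarrow> x < osup A \<Longrightarrow> \<exists>y\<in>A. x < y"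
  by (meson not_le osup_least)

lemma osup_eqI: "\<forall>y\<in>A. y \<le> s \<Longrightarrow> (\<And>b. \<forall>y\<in>A. y \<le> b \<Longrightarrow> s \<le> b) \<Longrightarrow> osup A = s"
  by (meson antisym osup_least osup_ub)

lemma wfrec_less: fixes F :: "('a::wellorder \<Rightarrow> 'b) \<Rightarrow> 'a \<Rightarrow> 'b" shows "wfrec {(x,y). x<y} F i = F (\<lambda>j. if j < i then wfrec {(x,y). x<y} F j else undefined) i"
  apply (subst wfrec[OF Wellfounded.wellorder_class.wf])
  apply (simp add: cut_def)
  done

lemma smo_inj: "strict_mono_on A (f::'a::linorder \<Rightarrow> 'b::linorder) \<Longrightarrow> inj_on f A"
  by (rule strict_mono_on_imp_inj_on)

lemma smo_D: "strict_mono_on A f \<Longrightarrow> x \<in> A \<Longrightarrow> y \<in> A \<Longrightarrow> x < y \<Longrightarrow> f x < f y"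
  by (simp add: strict_mono_on_def monotone_on_def)

lemma smo_iff: "strict_mono_on A (f::'a::linorder \<Rightarrow> 'b::linorder) \<Longrightarrow> x \<in> A \<Longrightarrow> y \<in> A \<Longrightarrow> (f x < f y) = (x < y)"
  by (metis smo_D not_less_iff_gr_or_eq order_less_asym)

lemma smo_le_iff: "strict_mono_on A (f::'a::linorder \<Rightarrow> 'b::linorder) \<Longrightarrow> x \<in> A \<Longrightarrow> y \<in> A \<Longrightarrow> (f x \<le> f y) = (x \<le> y)"
  by (metis smo_iff not_le)

lemma ord_iso_image: "strict_mono_on A f \<Longrightarrow> ord_iso A (f ` A)"
  unfolding ord_iso_def by (meson bij_betw_imageI smo_inj)

lemma ord_iso_sym: assumes "ord_iso A B" shows "ord_iso B A"
proof -
  obtain f where f: "bij_betw f A B" "strict_mono_on A f" using assms ord_iso_def by blast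
  let ?g = "the_inv_into A f"
  have "bij_betw ?g B A" using f(1) bij_betw_the_inv_into by blast
  moreover have "strict_mono_on B ?g"
  proof (rule strict_mono_onI)
    fix x y assume xy: "x \<in> B" "y \<in> B" "x < y"
    have a: "?g x \<in> A" "?g y \<in> A" using xy f(1) by (meson \<open>bij_betw ?g B A\<close> bij_betwE)+
    have "f (?g x) = x" "f (?g y) = y" using xy f(1) by (simp_all add: f_the_inv_into_f_bij_betw)
    then show "?g x < ?g y" using smo_iff[OF f(2) a] xy by simp
  qed
  ultimately show ?thesis unfolding ord_iso_def by blast
qed

lemma ord_iso_trans: assumes "ord_iso A B" "ord_iso B C" shows "ord_iso A C"
proof -
  obtain f where f: "bij_betw f A B" "strict_mono_on A f" using assms ord_iso_def by blast
  obtain g where g: "bij_betw g B C" "strict_mono_on B g" using assms ord_iso_def by blast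
  have "bij_betw (g o f) A C" using f g bij_betw_trans by blast
  moreover have "strict_mono_on A (g o f)"
    by (rule strict_mono_onI) (metis bij_betwE comp_apply f g smo_D)
  ultimately show ?thesis unfolding ord_iso_def by blast
qed

lemma ord_iso_sub: "ord_iso A B \<Longrightarrow> A' \<subseteq> A \<Longrightarrow> \<exists>B'. B' \<subseteq> B \<and> ord_iso A' B'"
  unfolding ord_iso_def
  by (metis bij_betw_def bij_betw_subset image_mono monotone_on_subset)

lemma smo_ge: assumes "strict_mono_on {..<b} (f::'a::wellorder \<Rightarrow> 'a)" "\<forall>x<b. f x < b'"
  shows "\<forall>x<b. x \<le> f x"
proof (rule ccontr)
  assume "\<not> (\<forall>x<b. x \<le> f x)"
  then obtain x where x: "x < b" "f x < x" by (auto simp: not_le)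
  define m where "m = (LEAST x. x < b \<and> f x < x)"
  have m: "m < b" "f m < m" using LeastI[of "\<lambda>x. x < b \<and> f x < x" x] x m_def by auto
  have "f (f m) < f m" using smo_D[OF assms(1), of "f m" m] m by auto
  moreover have "f m < b" using m by auto
  ultimately have "m \<le> f m" unfolding m_def by (simp add: Least_le)
  then show False using m by simp
qed

lemma has_otp_le: assumes "has_otp X b" "has_otp Y b'" "X \<subseteq> Y" shows "b \<le> b'"
proof -
  have "ord_iso {..<b} X" using assms(1) has_otp_def ord_iso_sym by blast
  then obtain X' where "X' \<subseteq> {..<b'}" "ord_iso {..<b} X'"
    using assms ord_iso_sub[of Y "{..<b'}" X] has_otp_def ord_iso_trans by meson
  then obtain f where f: "bij_betw f {..<b} X'" "strict_mono_on {..<b} f" using ord_iso_def by blast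
  have lt: "\<forall>x<b. f x < b'" using f \<open>X' \<subseteq> {..<b'}\<close> by (auto dest: bij_betwE)
  show ?thesis
  proof (rule ccontr)
    assume "\<not> b \<le> b'"
    then have "b' < b" by simp
    then show False using smo_ge[OF f(2) lt] lt by (meson leD)
  qed
qed

lemma has_otp_unique: "has_otp X b \<Longrightarrow> has_otp X b' \<Longrightarrow> b = b'"
  by (meson antisym has_otp_le order_refl)

lemma has_otp_iso: "ord_iso X Y \<Longrightarrow> has_otp Y b \<Longrightarrow> has_otp X b"
  unfolding has_otp_def using ord_iso_trans by blast



definition rk :: "'a::wellorder set \<Rightarrow> 'a \<Rightarrow> 'a" where
  "rk X = wfrec {(x,y). x<y} (\<lambda>r x. LEAST z. \<forall>y\<in>X. y<x \<longrightarrow> r y < z)"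

lemma rk_eq: "rk X x = (LEAST z. \<forall>y\<in>X. y<x \<longrightarrow> rk X y < z)"
  unfolding rk_def by (subst wfrec_less) (rule arg_cong[where f=Least], auto)

lemma rk_le: "rk X x \<le> x"
proof (induction x rule: less_induct)
  case (less x)
  have "\<forall>y\<in>X. y<x \<longrightarrow> rk X y < x" using less by (meson le_less_trans)
  then show ?case by (subst rk_eq) (rule Least_le)
qed

lemma rk_P: "\<forall>y\<in>X. y<x \<longrightarrow> rk X y < rk X x"
proof -
  have "\<forall>y\<in>X. y<x \<longrightarrow> rk X y < x" using rk_le by (meson le_less_trans)
  then show ?thesis by (subst (2) rk_eq) (rule LeastI)
qed

lemma rk_smo: "strict_mono_on X (rk X)"
  using rk_P by (meson strict_mono_onI)

lemma rk_down: assumes "x \<in> X" "z < rk X x" shows "\<exists>y\<in>X. rk X y = z"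
proof -
  have "\<not> (\<forall>y\<in>X. y<x \<longrightarrow> rk X y < z)"
    using assms(2) not_less_Least[of z "\<lambda>z. \<forall>y\<in>X. y<x \<longrightarrow> rk X y < z"] rk_eq[of X x] by simp
  then obtain y where y: "y \<in> X" "z \<le> rk X y" by (auto simp: not_less)
  define y0 where "y0 = (LEAST y. y \<in> X \<and> z \<le> rk X y)"
  have y0: "y0 \<in> X" "z \<le> rk X y0" using LeastI[of "\<lambda>y. y \<in> X \<and> z \<le> rk X y" y] y y0_def by auto
  show ?thesis
  proof (cases "rk X y0 = z")
    case True then show ?thesis using y0 by blast
  next
    case False
    then have "z < rk X y0" using y0 by simp
    then have "\<not> (\<forall>y\<in>X. y<y0 \<longrightarrow> rk X y < z)"
      using not_less_Least[of z "\<lambda>z. \<forall>y\<in>X. y<y0 \<longrightarrow> rk X y < z"] rk_eq[of X y0] by simp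
    then obtain y' where "y' \<in> X" "y' < y0" "z \<le> rk X y'" by (auto simp: not_less)
    then show ?thesis using y0_def not_less_Least by blast
  qed
qed

lemma otp_exists: assumes "X \<subseteq> {..<g}" shows "\<exists>b\<le>g. has_otp X b"
proof -
  let ?I = "rk X ` X"
  have sub: "?I \<subseteq> {..<g}"
  proof
    fix v assume "v \<in> ?I"
    then obtain x where "x \<in> X" "v = rk X x" by blast
    then show "v \<in> {..<g}" using assms rk_le[of X x] by auto
  qed
  define b where "b = (LEAST b. b \<notin> ?I)"
  have gI: "g \<notin> ?I" using sub by auto
  have bI: "b \<notin> ?I" using LeastI[of "\<lambda>b. b \<notin> ?I" g] gI b_def by auto
  have bg: "b \<le> g" unfolding b_def using gI by (rule Least_le)
  have "?I = {..<b}"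
  proof
    show "?I \<subseteq> {..<b}"
    proof
      fix v assume v: "v \<in> ?I"
      show "v \<in> {..<b}"
      proof (rule ccontr)
        assume "v \<notin> {..<b}"
        then have "b \<le> v" by simp
        then have "b < v" using v bI by (cases "b = v") auto
        then show False using v bI rk_down by blast
      qed
    qed
    show "{..<b} \<subseteq> ?I"
    proof
      fix z assume "z \<in> {..<b}"
      then have "z < b" by simp
      then show "z \<in> ?I" using not_less_Least[of z "\<lambda>b. b \<notin> ?I"] b_def by blast
    qed
  qed
  then have "ord_iso X {..<b}" using ord_iso_image[OF rk_smo] by metis
  then show ?thesis using bg has_otp_def by blast
qed



lemma cf_le: "cofinal_in d X \<Longrightarrow> has_otp X b \<Longrightarrow> cf d \<le> b"
  unfolding cf_def by (rule Least_le) blast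

lemma has_otp_finite: "has_otp X b \<Longrightarrow> finite X \<Longrightarrow> finite {..<b}"
  unfolding has_otp_def ord_iso_def using bij_betw_finite by blast

lemma lim_of_cf: assumes "infinite {..<cf d}" "x < d" shows "\<exists>y<d. x < y"
proof (rule ccontr)
  assume "\<not> (\<exists>y<d. x < y)"
  then have "cofinal_in d {x}" unfolding cofinal_in_def using assms(2) by (auto simp: not_less) (meson leD)
  moreover obtain b where "has_otp {x} b" using otp_exists[of "{x}" d] assms(2) by auto
  ultimately have "cf d \<le> b" "finite {..<b}" using cf_le has_otp_finite by blast+
  then have "finite {..<cf d}" by (meson finite_subset lessThan_subset_iff)
  then show False using assms(1) by simp
qed

lemma reg_bound:
  assumes cf: "cf lam = lam" and i: "i < lam" and h: "\<forall>j<i. h j < lam"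
  shows "\<exists>b<lam. \<forall>j<i. h j < b"
proof (rule ccontr)
  assume "\<not> ?thesis"
  then have unb: "\<forall>b<lam. \<exists>j<i. b \<le> h j" by (meson not_le)
  define R where "R = {x. x < i \<and> (\<forall>y<x. h y < h x)}"
  have smo: "strict_mono_on R h" by (rule strict_mono_onI) (auto simp: R_def)
  have cof: "cofinal_in lam (h ` R)"
    unfolding cofinal_in_def
  proof (intro conjI allI impI)
    show "h ` R \<subseteq> {..<lam}" using h R_def by auto
    fix x assume "x < lam"
    then obtain j where j: "j < i" "x \<le> h j" using unb by blast
    define k where "k = (LEAST j. j < i \<and> x \<le> h j)"
    have k: "k < i" "x \<le> h k" using LeastI[of "\<lambda>j. j < i \<and> x \<le> h j" j] j k_def by auto
    have "\<forall>y<k. h y < h k"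
    proof (intro allI impI)
      fix y assume "y < k"
      then have "\<not> (y < i \<and> x \<le> h y)" using k_def not_less_Least by blast
      then show "h y < h k" using \<open>y < k\<close> k by auto
    qed
    then have "k \<in> R" using k R_def by auto
    then show "\<exists>y\<in>h ` R. x \<le> y" using k by blast
  qed
  have "R \<subseteq> {..<i}" using R_def by auto
  then obtain r where r: "r \<le> i" "has_otp R r" using otp_exists by blast
  have "has_otp (h ` R) r" using has_otp_iso[OF ord_iso_sym[OF ord_iso_image[OF smo]] r(2)] .
  then have "cf lam \<le> r" using cf_le cof by blast
  then show False using cf r i by simp
qed

lemma omega_bound:
  assumes cf: "cf lam = lam" and k: "kap < lam" "infinite {..<kap}"
    and inc: "\<forall>n. bs n < bs (Suc n)" and lt: "\<forall>n. bs n < lam"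
  shows "\<exists>b<lam. \<forall>n. bs n < b"
proof (rule ccontr)
  assume "\<not> ?thesis"
  then have unb: "\<forall>b<lam. \<exists>n. b \<le> bs n" by (meson not_le)
  have sm: "strict_mono bs" using inc by (simp add: strict_mono_Suc_iff)
  have cof: "cofinal_in lam (range bs)" unfolding cofinal_in_def using lt unb by auto
  obtain r where r: "r \<le> lam" "has_otp (range bs) r" using otp_exists[of "range bs" lam] lt by auto
  have "cf lam \<le> r" using cf_le cof r by blast
  then have "r = lam" using r cf by simp
  then have "ord_iso {..<lam} (range bs)" using r ord_iso_sym has_otp_def by blast
  then obtain f where f: "bij_betw f {..<lam} (range bs)" "strict_mono_on {..<lam} f" using ord_iso_def by blast
  obtain N where N: "f kap = bs N" using f(1) k(1) by (meson bij_betwE lessThan_iff rangeE)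
  have "f ` {..<kap} \<subseteq> bs ` {..<N}"
  proof
    fix v assume "v \<in> f ` {..<kap}"
    then obtain x where x: "x < kap" "v = f x" by auto
    then have "f x < f kap" using smo_D[OF f(2)] k(1) by auto
    moreover obtain m where "f x = bs m" using f(1) x k(1) by (meson bij_betwE lessThan_iff order.strict_trans rangeE)
    ultimately have "m < N" using N sm strict_mono_less by metis
    then show "v \<in> bs ` {..<N}" using x \<open>f x = bs m\<close> by auto
  qed
  then have "finite (f ` {..<kap})" using finite_subset by blast
  moreover have "inj_on f {..<kap}" using f(1) k(1) bij_betw_def inj_on_subset by (metis lessThan_subset_iff less_imp_le)
  ultimately show False using k(2) finite_image_iff by blast
qed



definition isacc :: "'a::wellorder set \<Rightarrow> 'a \<Rightarrow> bool" where
  "isacc C g \<longleftrightarrow> C \<inter> {..<g} \<noteq> {} \<and> osup (C \<inter> {..<g}) = g"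

lemma isacc_in: "closed_in_ord lam C \<Longrightarrow> g < lam \<Longrightarrow> isacc C g \<Longrightarrow> g \<in> C"
  unfolding closed_in_ord_def isacc_def by blast

lemma isacc_mono: assumes "A \<subseteq> B" "isacc A g" shows "isacc B g"
proof -
  have "osup (A \<inter> {..<g}) \<le> osup (B \<inter> {..<g})" by (rule osup_mono[of _ _ g]) (use assms(1) in auto)
  moreover have "osup (B \<inter> {..<g}) \<le> g" by (rule osup_least) auto
  ultimately show ?thesis using assms unfolding isacc_def by auto
qed

lemma club_unb: "club_in lam C \<Longrightarrow> b < lam \<Longrightarrow> \<exists>x\<in>C. b \<le> x \<and> x < lam"
  unfolding club_in_def closed_in_ord_def by blast

lemma core:
  assumes cf: "cf lam = lam" and k: "kap < lam" "infinite {..<kap}"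
    and i: "i < lam" and C: "\<forall>j<i. club_in lam (C j)" and E: "club_in lam E"
    and b: "b < lam"
  shows "\<exists>g<lam. b \<le> g \<and> isacc E g \<and> (\<forall>j<i. isacc (C j) g)"
proof -
  have inflam: "infinite {..<cf lam}" using k cf by (metis finite_subset lessThan_subset_iff less_imp_le)
  have step: "\<exists>e'<lam. e < e' \<and> (\<forall>j<i. \<exists>x\<in>C j. e \<le> x \<and> x < e') \<and> (\<exists>x\<in>E. e \<le> x \<and> x < e')"
    if e: "e < lam" for e
  proof -
    define h where "h j = (SOME x. x \<in> C j \<and> e \<le> x \<and> x < lam)" for j
    have h: "h j \<in> C j \<and> e \<le> h j \<and> h j < lam" if "j < i" for j
      unfolding h_def by (rule someI_ex) (use club_unb C that e in blast)
    obtain b1 where b1: "b1 < lam" "\<forall>j<i. h j < b1" using reg_bound[OF cf i] h by blast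
    obtain x where x: "x \<in> E" "e \<le> x" "x < lam" using club_unb E e by blast
    obtain y where y: "y < lam" "x < y" using lim_of_cf[OF inflam x(3)] by blast
    show ?thesis
      apply (rule exI[of _ "max b1 y"])
      using b1 h x y by (auto simp: less_max_iff_disj)
  qed
  define nx where "nx e = (SOME e'. e' < lam \<and> e < e' \<and> (\<forall>j<i. \<exists>x\<in>C j. e \<le> x \<and> x < e') \<and> (\<exists>x\<in>E. e \<le> x \<and> x < e'))" for e
  have nx: "nx e < lam \<and> e < nx e \<and> (\<forall>j<i. \<exists>x\<in>C j. e \<le> x \<and> x < nx e) \<and> (\<exists>x\<in>E. e \<le> x \<and> x < nx e)"
    if "e < lam" for e
    unfolding nx_def by (rule someI_ex) (use step[OF that] in blast)
  define bs where "bs n = (nx ^^ n) b" for n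
  have bsS: "bs (Suc n) = nx (bs n)" for n by (simp add: bs_def)
  have bslt: "bs n < lam" for n by (induction n) (auto simp: bsS b nx bs_def[of 0])
  have inc: "\<forall>n. bs n < bs (Suc n)" using bslt nx bsS by auto
  obtain ub where ub: "ub < lam" "\<forall>n. bs n < ub" using omega_bound[OF cf k inc] bslt by blast
  define g where "g = osup (range bs)"
  have bnd: "\<forall>y\<in>range bs. y \<le> ub" using ub by (auto intro: less_imp_le)
  have gle: "g \<le> ub" unfolding g_def using bnd by (rule osup_least)
  have bsg: "bs n \<le> g" for n unfolding g_def using bnd by (rule osup_ub) auto
  have acc: "isacc K g" if K: "\<forall>n. \<exists>x\<in>K. bs n \<le> x \<and> x < bs (Suc n)" for K
  proof -
    obtain x where x: "x \<in> K" "bs 0 \<le> x" "x < bs (Suc 0)" using K by blast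
    then have ne: "K \<inter> {..<g} \<noteq> {}" using bsg[of "Suc 0"] by auto
    have up: "osup (K \<inter> {..<g}) \<le> g" by (rule osup_least) auto
    have "bs n \<le> osup (K \<inter> {..<g})" for n
    proof -
      obtain x where x: "x \<in> K" "bs n \<le> x" "x < bs (Suc n)" using K by blast
      then have "x \<in> K \<inter> {..<g}" using bsg[of "Suc n"] by auto
      then have "x \<le> osup (K \<inter> {..<g})" by (rule osup_ub[rotated, of _ _ g]) auto
      then show ?thesis using x by simp
    qed
    then have "g \<le> osup (K \<inter> {..<g})" unfolding g_def by (intro osup_least) auto
    then show ?thesis unfolding isacc_def using up ne by (simp add: antisym)
  qed
  have "isacc E g" by (rule acc) (use nx bslt bsS in auto)
  moreover have "isacc (C j) g" if "j < i" for j by (rule acc) (use nx bslt bsS that in auto)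
  moreover have "b \<le> g" using bsg[of 0] by (simp add: bs_def)
  moreover have "g < lam" using gle ub by simp
  ultimately show ?thesis by blast
qed

lemma club_inter:
  assumes cf: "cf lam = lam" and k: "kap < lam" "infinite {..<kap}"
    and i: "i < lam" and C: "\<forall>j<i. club_in lam (C j)" and E: "club_in lam E"
  shows "club_in lam (E \<inter> (\<Inter>j\<in>{..<i}. C j))"
proof -
  let ?I = "E \<inter> (\<Inter>j\<in>{..<i}. C j)"
  have inK: "g \<in> K" if "closed_in_ord lam K" "?I \<subseteq> K" "g < lam" "isacc ?I g" for K g
    using isacc_in[OF that(1) that(3) isacc_mono[OF that(2) that(4)]] .
  have cl: "closed_in_ord lam ?I"
    unfolding closed_in_ord_def
  proof (intro conjI allI impI)
    show "?I \<subseteq> {..<lam}" using E unfolding club_in_def closed_in_ord_def by blast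
    fix g assume g: "g < lam" "?I \<inter> {..<g} \<noteq> {} \<and> osup (?I \<inter> {..<g}) = g"
    then have "isacc ?I g" using isacc_def by blast
    have "g \<in> E" using inK[of E g] E g(1) \<open>isacc ?I g\<close> unfolding club_in_def by blast
    moreover have "g \<in> C j" if "j < i" for j using inK[of "C j" g] C that g(1) \<open>isacc ?I g\<close> unfolding club_in_def by blast
    ultimately show "g \<in> ?I" by blast
  qed
  have "\<exists>g\<in>?I. b \<le> g" if bl: "b < lam" for b
  proof -
    obtain g where g: "g < lam" "b \<le> g" "isacc E g" "\<forall>j<i. isacc (C j) g" using core[OF cf k i C E bl] by blast
    have "g \<in> E" using isacc_in[of lam E g] E g unfolding club_in_def by blast
    moreover have "g \<in> C j" if "j < i" for j using isacc_in[of lam "C j" g] C that g unfolding club_in_def by blast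
    ultimately show ?thesis using g by blast
  qed
  then show ?thesis using cl club_in_def by blast
qed

lemma acc_club:
  assumes cf: "cf lam = lam" and k: "kap < lam" "infinite {..<kap}" and E: "club_in lam E"
  shows "club_in lam {g. g < lam \<and> isacc E g}"
proof -
  let ?A = "{g. g < lam \<and> isacc E g}"
  have AE: "?A \<subseteq> E"
  proof
    fix g assume "g \<in> ?A"
    then show "g \<in> E" using isacc_in[of lam E g] E unfolding club_in_def by blast
  qed
  have cl: "closed_in_ord lam ?A"
    unfolding closed_in_ord_def
  proof (intro conjI allI impI)
    show "?A \<subseteq> {..<lam}" by auto
    fix g assume g: "g < lam" "?A \<inter> {..<g} \<noteq> {} \<and> osup (?A \<inter> {..<g}) = g"
    then have "isacc ?A g" using isacc_def by blast
    then show "g \<in> ?A" using isacc_mono[OF AE \<open>isacc ?A g\<close>] g by blast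
  qed
  have "\<exists>g\<in>?A. b \<le> g" if bl: "b < lam" for b
  proof -
    obtain g where g: "g < lam" "b \<le> g" "isacc E g"
      using core[OF cf k k(1), of "\<lambda>_. E" E b] E bl by auto
    then show ?thesis by blast
  qed
  then show ?thesis using cl club_in_def by blast
qed



lemma Drop_eq: "Drop X E = (\<lambda>a. drop a E) ` {a\<in>X. drop_defined a E}"
  unfolding Drop_def by auto

lemma drop_le: "drop a E \<le> a"
  unfolding drop_def by (rule osup_least) auto

lemma drop_ub: "e \<in> E \<Longrightarrow> e < a \<Longrightarrow> e \<le> drop a E"
  unfolding drop_def by (rule osup_ub[of _ a]) auto

lemma drop_mono_arg: "a \<le> a' \<Longrightarrow> drop a E \<le> drop a' E"
  unfolding drop_def by (rule osup_mono[of _ _ a']) auto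

lemma drop_mono_set: "E1 \<subseteq> E2 \<Longrightarrow> drop a E1 \<le> drop a E2"
  unfolding drop_def by (rule osup_mono[of _ _ a]) auto

lemma drop_in: assumes "closed_in_ord lam E" "a < lam" "drop_defined a E" shows "drop a E \<in> E"
proof (cases "drop a E \<in> E")
  case False
  let ?d = "drop a E"
  have da: "?d \<le> a" by (rule drop_le)
  have "E \<inter> {..<?d} = E \<inter> {..<a}"
  proof
    show "E \<inter> {..<?d} \<subseteq> E \<inter> {..<a}" using da by auto
    show "E \<inter> {..<a} \<subseteq> E \<inter> {..<?d}"
    proof
      fix e assume e: "e \<in> E \<inter> {..<a}"
      then have "e \<le> ?d" using drop_ub by auto
      moreover have "e \<noteq> ?d" using e False by auto
      ultimately show "e \<in> E \<inter> {..<?d}" using e by auto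
    qed
  qed
  then have "isacc E ?d" using assms(3) unfolding isacc_def drop_defined_def drop_def by simp
  then show ?thesis using isacc_in[OF assms(1)] da assms(2) by (meson le_less_trans)
qed simp

lemma Drop_sub: assumes "X \<subseteq> {..<d}" shows "Drop X E \<subseteq> {..<d}"
proof
  fix x assume "x \<in> Drop X E"
  then obtain a where "a \<in> X" "x = drop a E" unfolding Drop_eq by auto
  then show "x \<in> {..<d}" using drop_le[of a E] assms by (auto intro: le_less_trans)
qed

lemma Drop_closed:
  assumes c: "club_in d c" and lim: "\<forall>x<d. \<exists>y<d. x < y"
  shows "closed_in_ord d (Drop c E)"
proof -
  let ?f = "\<lambda>a. drop a E"
  let ?A = "{a\<in>c. drop_defined a E}"
  have cd: "c \<subseteq> {..<d}" using c unfolding club_in_def closed_in_ord_def by blast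
  have ccl: "closed_in_ord d c" using c unfolding club_in_def by blast
  have D: "Drop c E = ?f ` ?A" by (rule Drop_eq)
  have sub: "Drop c E \<subseteq> {..<d}" using Drop_sub[OF cd] .
  have "g \<in> Drop c E" if g: "g < d" "Drop c E \<inter> {..<g} \<noteq> {}" "osup (Drop c E \<inter> {..<g}) = g" for g
  proof -
    define A' where "A' = {a\<in>?A. ?f a < g}"
    have DA': "Drop c E \<inter> {..<g} = ?f ` A'" unfolding D A'_def by auto
    have A'ne: "A' \<noteq> {}" using DA' g(2) by auto
    have K1: "e \<le> ?f a \<and> ?f a < g" if "a \<in> A'" "e \<in> E" "e < a" for a e
      using that drop_ub A'_def by auto
    have gosup: "g = osup (?f ` A')" using g(3) DA' by simp
    show ?thesis
    proof (cases "\<forall>x<d. \<exists>a\<in>A'. x \<le> a")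
      case True
      have Eg: "e < g" if eE: "e \<in> E" "e < d" for e
      proof -
        obtain y where y: "y < d" "e < y" using lim eE by blast
        obtain a where a: "a \<in> A'" "y \<le> a" using True y by blast
        have "e < a" using a y by simp
        then show ?thesis using K1[OF a(1) eE(1)] by (meson le_less_trans)
      qed
      obtain y where y: "y < d" "g < y" using lim g(1) by blast
      obtain a0 where a0: "a0 \<in> c" "y \<le> a0" using c y unfolding club_in_def by blast
      have a0d: "a0 < d" using a0 cd by auto
      have EE: "E \<inter> {..<a0} = E \<inter> {..<g}"
        using Eg a0 a0d y by (auto intro: less_trans less_le_trans)
      have le1: "?f a \<le> osup (E \<inter> {..<g})" if "a \<in> A'" for a
      proof -
        have "a < d" using that A'_def cd by auto
        then have "E \<inter> {..<a} \<subseteq> E \<inter> {..<g}" using Eg by auto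
        then show ?thesis unfolding drop_def by (rule osup_mono[of _ _ g]) auto
      qed
      have "osup (?f ` A') \<le> osup (E \<inter> {..<g})" by (rule osup_least) (use le1 in auto)
      then have "g \<le> osup (E \<inter> {..<g})" using gosup by simp
      moreover have "osup (E \<inter> {..<g}) \<le> g" by (rule osup_least) auto
      ultimately have fa0: "?f a0 = g" unfolding drop_def using EE by simp
      obtain a1 where a1: "a1 \<in> A'" using A'ne by blast
      then have "E \<inter> {..<a1} \<noteq> {}" "a1 < d" using A'_def drop_defined_def cd by auto
      then have "E \<inter> {..<a0} \<noteq> {}" unfolding EE using Eg by auto
      then have "a0 \<in> ?A" using a0 drop_defined_def by auto
      then show ?thesis using fa0 D by (metis image_eqI)
    next
      case False
      then obtain x where x: "x < d" "\<forall>a\<in>A'. a < x" by (auto simp: not_le)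
      define a where "a = osup A'"
      have bA: "\<forall>y\<in>A'. y \<le> x" using x by (auto intro: less_imp_le)
      have ax: "a \<le> x" unfolding a_def using bA by (rule osup_least)
      have le_a: "y \<le> a" if "y \<in> A'" for y unfolding a_def using bA that by (rule osup_ub)
      have "osup (?f ` A') \<le> ?f a" by (rule osup_least) (use le_a drop_mono_arg in auto)
      then have ga: "g \<le> ?f a" using gosup by simp
      have ania: "a \<notin> A'" using ga A'_def by auto
      have lt_a: "y < a" if "y \<in> A'" for y using le_a[OF that] ania that by (cases "y = a") auto
      have "isacc c a"
      proof -
        have ne: "c \<inter> {..<a} \<noteq> {}" using A'ne lt_a A'_def by auto
        have "osup (c \<inter> {..<a}) \<le> a" by (rule osup_least) auto
        moreover have "osup A' \<le> osup (c \<inter> {..<a})"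
          by (rule osup_mono[of _ _ a]) (use lt_a A'_def in auto)
        then have "a \<le> osup (c \<inter> {..<a})" using a_def by simp
        ultimately show ?thesis using ne isacc_def by auto
      qed
      then have ac: "a \<in> c" using isacc_in[OF ccl] ax x(1) by (meson le_less_trans)
      have "?f a \<le> g" unfolding drop_def
      proof (rule osup_least, intro ballI)
        fix e assume e: "e \<in> E \<inter> {..<a}"
        then obtain a' where "a' \<in> A'" "e < a'" using osup_lt[OF bA] a_def by auto
        then have "e \<le> ?f a' \<and> ?f a' < g" using K1 e by blast
        then show "e \<le> g" by (metis le_less_trans less_imp_le)
      qed
      then have fa: "?f a = g" using ga by simp
      obtain a1 where a1: "a1 \<in> A'" using A'ne by blast
      then have "E \<inter> {..<a1} \<noteq> {}" using A'_def drop_defined_def by auto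
      then have "E \<inter> {..<a} \<noteq> {}" using lt_a[OF a1] by auto
      then have "a \<in> ?A" using ac drop_defined_def by auto
      then show ?thesis using fa D by (metis image_eqI)
    qed
  qed
  then show ?thesis unfolding closed_in_ord_def using sub by blast
qed



lemma Drop_acc:
  assumes E: "isacc E d" and c: "club_in d c" and co: "has_otp c kap" and cfd: "cf d = kap"
    and lim: "\<forall>x<d. \<exists>y<d. x < y"
  shows "osup (Drop c E) = d \<and> has_otp (Drop c E) kap"
proof -
  let ?f = "\<lambda>a. drop a E"
  let ?A = "{a\<in>c. drop_defined a E}"
  let ?D = "Drop c E"
  have cd: "c \<subseteq> {..<d}" using c unfolding club_in_def closed_in_ord_def by blast
  have D: "?D = ?f ` ?A" by (rule Drop_eq)
  have sub: "?D \<subseteq> {..<d}" using Drop_sub[OF cd] .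
  have cof: "cofinal_in d ?D"
    unfolding cofinal_in_def
  proof (intro conjI allI impI)
    show "?D \<subseteq> {..<d}" by (rule sub)
    fix x assume x: "x < d"
    have "x < osup (E \<inter> {..<d})" using E x unfolding isacc_def by simp
    moreover have "\<forall>y\<in>E \<inter> {..<d}. y \<le> d" by auto
    ultimately obtain e where e: "e \<in> E" "e < d" "x < e" using osup_lt[of "E \<inter> {..<d}" d x] by auto
    obtain y where y: "y < d" "e < y" using lim e(2) by blast
    obtain a where a: "a \<in> c" "y \<le> a" using c y unfolding club_in_def by blast
    have ea: "e < a" using a y by simp
    then have "a \<in> ?A" using a e drop_defined_def by auto
    moreover have "e \<le> ?f a" using drop_ub[OF e(1) ea] .
    ultimately have "?f a \<in> ?D" "x \<le> ?f a" using D e(3) by (blast, meson less_imp_le order.trans)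
    then show "\<exists>y\<in>?D. x \<le> y" by blast
  qed
  have bd: "\<forall>y\<in>?D. y \<le> d"
  proof
    fix y assume "y \<in> ?D"
    then have "y < d" using sub by blast
    then show "y \<le> d" by (rule less_imp_le)
  qed
  have os: "osup ?D = d"
  proof (rule antisym)
    show "osup ?D \<le> d" using bd by (rule osup_least)
    show "d \<le> osup ?D"
    proof (rule ccontr)
      assume "\<not> d \<le> osup ?D"
      then have "osup ?D < d" by simp
      then obtain y where y: "y < d" "osup ?D < y" using lim by blast
      then obtain z where z: "z \<in> ?D" "y \<le> z" using cof unfolding cofinal_in_def by blast
      have "z \<le> osup ?D" using bd z(1) by (rule osup_ub)
      then show False using y(2) z(2) by (meson leD less_le_trans)
    qed
  qed
  obtain b where b: "b \<le> d" "has_otp ?D b" using otp_exists[OF sub] by blast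
  have kb: "kap \<le> b" using cf_le[OF cof b(2)] cfd by simp
  define s where "s x = (LEAST a. a \<in> ?A \<and> ?f a = x)" for x
  have s: "s x \<in> ?A \<and> ?f (s x) = x" if xD: "x \<in> ?D" for x
  proof -
    have "x \<in> ?f ` ?A" using xD D by simp
    then obtain a where "a \<in> ?A" "?f a = x" by blast
    then show ?thesis unfolding s_def using LeastI[of "\<lambda>a. a \<in> ?A \<and> ?f a = x" a] by blast
  qed
  have smo: "strict_mono_on ?D s"
  proof (rule strict_mono_onI)
    fix x y assume xy: "x \<in> ?D" "y \<in> ?D" "x < y"
    show "s x < s y"
    proof (rule ccontr)
      assume "\<not> s x < s y"
      then have "?f (s y) \<le> ?f (s x)" using drop_mono_arg by (simp add: not_less)
      moreover have "?f (s x) = x" "?f (s y) = y" using s xy(1,2) by blast+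
      ultimately show False using xy(3) by simp
    qed
  qed
  have sD: "s ` ?D \<subseteq> c"
  proof
    fix v assume "v \<in> s ` ?D"
    then obtain x where "x \<in> ?D" "v = s x" by blast
    then show "v \<in> c" using s[of x] by blast
  qed
  have "ord_iso c {..<kap}" using co unfolding has_otp_def .
  then obtain B where B: "B \<subseteq> {..<kap}" "ord_iso (s ` ?D) B" using ord_iso_sub[OF _ sD] by blast
  obtain b' where b': "b' \<le> kap" "has_otp B b'" using otp_exists[OF B(1)] by blast
  have "has_otp ?D b'"
    using has_otp_iso[OF ord_iso_image[OF smo] has_otp_iso[OF B(2) b'(2)]] .
  then have "b = b'" using b(2) has_otp_unique by blast
  then have "b = kap" using kb b' by simp
  then show ?thesis using os b by simp
qed



lemma inf_sq: "infinite A \<Longrightarrow> A \<times> A \<approx> A"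
  using eqpoll_iff_card_of_ordIso card_of_Times_same_infinite by blast

lemma reg_mu:
  fixes kap mu m0 :: "'a::wellorder" and g :: "'b \<Rightarrow> 'a"
  assumes mu: "mu = (LEAST m. {..<kap} \<prec> {..<m})" and mu0: "{..<kap} \<prec> {..<m0}"
    and k: "infinite {..<kap}"
    and A: "A \<lesssim> {..<kap}" and g: "\<forall>x\<in>A. g x < mu"
  shows "\<exists>b<mu. \<forall>x\<in>A. g x < b"
proof (rule ccontr)
  assume "\<not> ?thesis"
  then have unb: "\<forall>b<mu. \<exists>x\<in>A. b \<le> g x" by (auto simp: not_less) (meson leD)
  have kmu: "{..<kap} \<prec> {..<mu}" unfolding mu by (rule LeastI[of _ m0]) (rule mu0)
  have cov: "{..<mu} \<subseteq> (\<Union>x\<in>A. {..g x})"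
  proof
    fix b assume "b \<in> {..<mu}"
    then obtain x where "x \<in> A" "b \<le> g x" using unb by auto
    then show "b \<in> (\<Union>x\<in>A. {..g x})" by auto
  qed
  have each: "{..g x} \<lesssim> {..<kap}" if xA: "x \<in> A" for x
  proof -
    have nl: "\<not> {..<kap} \<prec> {..<g x}"
    proof
      assume "{..<kap} \<prec> {..<g x}"
      then have "mu \<le> g x" unfolding mu by (rule Least_le)
      then show False using g xA by (simp add: not_le[symmetric])
    qed
    show ?thesis
    proof (cases "g x < kap")
      case True
      then have "{..g x} \<subseteq> {..<kap}" by auto
      then show ?thesis by (rule subset_imp_lepoll)
    next
      case False
      then have "{..<kap} \<subseteq> {..<g x}" by auto
      then have "{..<kap} \<lesssim> {..<g x}" by (rule subset_imp_lepoll)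
      then have eq: "{..<kap} \<approx> {..<g x}" using nl unfolding lesspoll_def by blast
      then have inf: "infinite {..<g x}" using k eqpoll_finite_iff by blast
      have "{..g x} = insert (g x) {..<g x}" by auto
      also have "\<dots> \<approx> {..<g x}" using inf by (rule infinite_insert_eqpoll)
      also have "\<dots> \<approx> {..<kap}" using eq by (rule eqpoll_sym)
      finally show ?thesis by (rule eqpoll_imp_lepoll)
    qed
  qed
  have "(\<Union>x\<in>A. {..g x}) \<lesssim> (\<Union>x\<in>A. {x} \<times> {..<kap})"
  proof (rule UN_lepoll_UN)
    fix x assume "x \<in> A"
    have "{..g x} \<lesssim> {..<kap}" using each \<open>x \<in> A\<close> .
    also have "{..<kap} \<approx> {x} \<times> {..<kap}" by (rule eqpoll_sym[OF times_singleton_eqpoll])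
    finally show "{..g x} \<lesssim> {x} \<times> {..<kap}" .
  next
    show "pairwise (\<lambda>x y. disjnt ({x} \<times> {..<kap}) ({y} \<times> {..<kap})) A"
      unfolding pairwise_def disjnt_def by blast
  qed
  also have "(\<Union>x\<in>A. {x} \<times> {..<kap}) = A \<times> {..<kap}" by auto
  also have "A \<times> {..<kap} \<lesssim> {..<kap} \<times> {..<kap}" using A by (rule times_lepoll_mono) simp
  also have "{..<kap} \<times> {..<kap} \<approx> {..<kap}" using k by (rule inf_sq)
  finally have "(\<Union>x\<in>A. {..g x}) \<lesssim> {..<kap}" .
  then have m: "{..<mu} \<lesssim> {..<kap}" using lepoll_trans[OF subset_imp_lepoll[OF cov]] by blast
  have "{..<kap} \<lesssim> {..<mu}" "\<not> {..<kap} \<approx> {..<mu}" using kmu unfolding lesspoll_def by blast+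
  then show False using lepoll_antisym[OF _ m] by blast
qed



lemma stab:
  fixes f :: "'a::wellorder \<Rightarrow> 'b::wellorder"
  assumes anti: "\<And>j k. j \<le> k \<Longrightarrow> k < mu \<Longrightarrow> f k \<le> f j" and j0: "j0 < mu"
  shows "\<exists>j<mu. \<forall>k. j \<le> k \<longrightarrow> k < mu \<longrightarrow> f k = f j"
proof -
  define m where "m = (LEAST y. \<exists>k<mu. f k = y)"
  have "\<exists>k<mu. f k = m" unfolding m_def by (rule LeastI[of _ "f j0"]) (use j0 in blast)
  then obtain j where j: "j < mu" "f j = m" by blast
  have "f k = f j" if "j \<le> k" "k < mu" for k
  proof -
    have "f k \<le> f j" using anti that by blast
    moreover have "m \<le> f k" unfolding m_def by (rule Least_le) (use that in blast)
    ultimately show ?thesis using j by simp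
  qed
  then show ?thesis using j by blast
qed

lemma lepoll_of_otp: "has_otp X b \<Longrightarrow> X \<lesssim> {..<b}"
  unfolding has_otp_def ord_iso_def lepoll_def bij_betw_def by blast



theorem mainTheorem2:
  fixes kap lam :: "'a::wellorder"
    and S E' :: "'a set"
    and c :: "'a \<Rightarrow> 'a set"
  assumes "regular_cardinal kap" and "regular_cardinal lam"
    and "\<exists>\<mu><lam. {..<kap} \<prec> {..<\<mu>}"
    and "S \<subseteq> {\<delta>. \<delta> < lam \<and> cf \<delta> = kap}"
    and "stationary_in lam S"
    and "\<forall>\<delta>\<in>S. club_in \<delta> (c \<delta>) \<and> has_otp (c \<delta>) kap"
    and "club_in lam E'"
  shows "\<exists>E. club_in lam E \<and> E \<subseteq> E' \<and>
           (\<forall>\<delta>\<in>S. closed_in_ord \<delta> (Drop (c \<delta>) E)) \<and>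
           (\<forall>E''. club_in lam E'' \<longrightarrow>
              stationary_in lam {\<delta>\<in>S. Drop (c \<delta>) E \<subseteq> E'' \<and>
                 osup (Drop (c \<delta>) E) = \<delta> \<and> has_otp (Drop (c \<delta>) E) kap})"
proof -
  have kinf: "infinite {..<kap}" and cfk: "cf kap = kap" using assms(1) regular_cardinal_def by auto
  have cfl: "cf lam = lam" using assms(2) regular_cardinal_def by auto
  obtain m0 where m0: "m0 < lam" "{..<kap} \<prec> {..<m0}" using assms(3) by blast
  have lt_of: "kap < m" if "{..<kap} \<prec> {..<m}" for m :: 'a
  proof (rule ccontr)
    assume "\<not> kap < m"
    then have "{..<m} \<subseteq> {..<kap}" by auto
    then have "{..<m} \<lesssim> {..<kap}" by (rule subset_imp_lepoll)
    moreover have "{..<kap} \<lesssim> {..<m}" "\<not> {..<kap} \<approx> {..<m}" using that unfolding lesspoll_def by blast+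
    ultimately show False using lepoll_antisym by blast
  qed
  have kl: "kap < lam" using lt_of[OF m0(2)] m0(1) by simp
  define mu where "mu = (LEAST m::'a. {..<kap} \<prec> {..<m})"
  have mum0: "mu \<le> m0" unfolding mu_def by (rule Least_le) (rule m0(2))
  have kmu: "{..<kap} \<prec> {..<mu}" unfolding mu_def by (rule LeastI[of _ m0]) (rule m0(2))
  have kapmu: "kap < mu" using lt_of[OF kmu] .
  have mul: "mu < lam" using mum0 m0(1) by simp
  have Sd: "\<delta> < lam" "cf \<delta> = kap" "club_in \<delta> (c \<delta>)" "has_otp (c \<delta>) kap" "\<forall>x<\<delta>. \<exists>y<\<delta>. x < y"
    if "\<delta> \<in> S" for \<delta>
  proof -
    show "\<delta> < lam" "cf \<delta> = kap" using assms(4) that by auto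
    show "club_in \<delta> (c \<delta>)" "has_otp (c \<delta>) kap" using assms(6) that by auto
    show "\<forall>x<\<delta>. \<exists>y<\<delta>. x < y" using lim_of_cf[of \<delta>] \<open>cf \<delta> = kap\<close> kinf by auto
  qed
  have closedD: "\<forall>\<delta>\<in>S. closed_in_ord \<delta> (Drop (c \<delta>) E)" for E
    using Drop_closed Sd by blast
  let ?P = "\<lambda>E K \<delta>. Drop (c \<delta>) E \<subseteq> K \<and> osup (Drop (c \<delta>) E) = \<delta> \<and> has_otp (Drop (c \<delta>) E) kap"
  show ?thesis
  proof (rule ccontr)
    assume neg: "\<not> ?thesis"
    have G_ex: "\<exists>K. club_in lam K \<and> (\<forall>\<delta>\<in>S. \<delta> \<in> K \<longrightarrow> \<not> ?P E K \<delta>)"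
      if E: "club_in lam E" "E \<subseteq> E'" for E
    proof -
      obtain E'' where E'': "club_in lam E''" "\<not> stationary_in lam {\<delta>\<in>S. ?P E E'' \<delta>}"
        using neg E closedD by blast
      have "{\<delta>\<in>S. ?P E E'' \<delta>} \<subseteq> {..<lam}" using assms(4) by auto
      then obtain C where C: "club_in lam C" "{\<delta>\<in>S. ?P E E'' \<delta>} \<inter> C = {}"
        using E''(2) unfolding stationary_in_def by blast
      have "club_in lam (C \<inter> (\<Inter>j\<in>{..<kap}. E''))"
        by (rule club_inter[OF cfl kl kinf kl]) (use C E'' in auto)
      moreover have "C \<inter> (\<Inter>j\<in>{..<kap}. E'') = C \<inter> E''"
      proof -
        have "{..<kap} \<noteq> {}" using kinf by auto
        then show ?thesis by auto
      qed
      ultimately have K: "club_in lam (C \<inter> E'')" by simp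
      have "\<forall>\<delta>\<in>S. \<delta> \<in> C \<inter> E'' \<longrightarrow> \<not> ?P E (C \<inter> E'') \<delta>"
        using C(2) by blast
      then show ?thesis using K by blast
    qed
    define G where "G E = (SOME K. club_in lam K \<and> (\<forall>\<delta>\<in>S. \<delta> \<in> K \<longrightarrow> \<not> ?P E K \<delta>))" for E
    have G: "club_in lam (G E) \<and> (\<forall>\<delta>\<in>S. \<delta> \<in> G E \<longrightarrow> \<not> ?P E (G E) \<delta>)"
      if "club_in lam E" "E \<subseteq> E'" for E
      unfolding G_def by (rule someI_ex) (rule G_ex[OF that])
    define Es where "Es = wfrec {(x,y). x<(y::'a)} (\<lambda>r i. E' \<inter> (\<Inter>j\<in>{..<i}. G (r j)))"
    have Es_eq: "Es i = E' \<inter> (\<Inter>j\<in>{..<i}. G (Es j))" for i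
      unfolding Es_def by (subst wfrec_less) simp
    have Es_sub: "Es i \<subseteq> G (Es j)" if "j < i" for i j
      using that Es_eq[of i] by auto
    have Es_anti: "Es i \<subseteq> Es j" if "j \<le> i" for i j
      using that Es_eq[of i] Es_eq[of j] by auto
    have Es_club: "i \<le> mu \<longrightarrow> club_in lam (Es i) \<and> Es i \<subseteq> E'" for i
    proof (induction i rule: less_induct)
      case (less i)
      show ?case
      proof
        assume im: "i \<le> mu"
        have "\<forall>j<i. club_in lam (G (Es j))" using less im G by auto
        then have "club_in lam (E' \<inter> (\<Inter>j\<in>{..<i}. G (Es j)))"
          using club_inter[OF cfl kl kinf, of i "\<lambda>j. G (Es j)" E'] im mul assms(7) by auto
        then show "club_in lam (Es i) \<and> Es i \<subseteq> E'" using Es_eq[of i] by auto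
      qed
    qed
    have cmu: "club_in lam (Es mu)" using Es_club by blast
    have "club_in lam {g. g < lam \<and> isacc (Es mu) g}" by (rule acc_club[OF cfl kl kinf cmu])
    then obtain d where d: "d \<in> S" "d < lam" "isacc (Es mu) d"
      using assms(5) unfolding stationary_in_def by blast
    note dS = Sd[OF d(1)]
    have dacc: "isacc (Es j) d" if "j \<le> mu" for j using isacc_mono[OF Es_anti[OF that] d(3)] .
    have dmu: "d \<in> Es mu" using isacc_in[of lam "Es mu" d] cmu d unfolding club_in_def by blast
    have tex: "\<exists>t<mu. \<forall>k. t \<le> k \<longrightarrow> k < mu \<longrightarrow> drop_defined a (Es k) = drop_defined a (Es t) \<and> drop a (Es k) = drop a (Es t)" for a
    proof -
      obtain j1 where j1: "j1 < mu" "\<forall>k. j1 \<le> k \<longrightarrow> k < mu \<longrightarrow> (if drop_defined a (Es k) then 1 else 0::nat) = (if drop_defined a (Es j1) then 1 else 0)"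
      proof -
        have "\<exists>j<mu. \<forall>k. j \<le> k \<longrightarrow> k < mu \<longrightarrow> (if drop_defined a (Es k) then 1 else 0::nat) = (if drop_defined a (Es j) then 1 else 0)"
        proof (rule stab[OF _ kapmu])
          fix j k :: 'a assume "j \<le> k" "k < mu"
          then have "Es k \<subseteq> Es j" using Es_anti[of j k] by blast
          then show "(if drop_defined a (Es k) then 1 else 0::nat) \<le> (if drop_defined a (Es j) then 1 else 0)"
            unfolding drop_defined_def by auto
        qed
        then show ?thesis using that by blast
      qed
      obtain j2 where j2: "j2 < mu" "\<forall>k. j2 \<le> k \<longrightarrow> k < mu \<longrightarrow> drop a (Es k) = drop a (Es j2)"
      proof -
        have "\<exists>j<mu. \<forall>k. j \<le> k \<longrightarrow> k < mu \<longrightarrow> drop a (Es k) = drop a (Es j)"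
        proof (rule stab[OF _ kapmu])
          fix j k :: 'a assume "j \<le> k" "k < mu"
          then have "Es k \<subseteq> Es j" using Es_anti[of j k] by blast
          then show "drop a (Es k) \<le> drop a (Es j)" by (rule drop_mono_set)
        qed
        then show ?thesis using that by blast
      qed
      define t where "t = max j1 j2"
      have "t < mu" using j1 j2 t_def by simp
      moreover have "drop_defined a (Es k) = drop_defined a (Es t) \<and> drop a (Es k) = drop a (Es t)"
        if "t \<le> k" "k < mu" for k
      proof -
        have tm: "t < mu" using that by (rule le_less_trans)
        have "(if drop_defined a (Es k) then 1 else 0::nat) = (if drop_defined a (Es t) then 1 else 0)"
          using j1(2)[rule_format, of k] j1(2)[rule_format, of t] that tm t_def by auto
        moreover have "drop a (Es k) = drop a (Es t)"
          using j2(2)[rule_format, of k] j2(2)[rule_format, of t] that tm t_def by auto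
        ultimately show ?thesis by (auto split: if_splits)
      qed
      ultimately show ?thesis by blast
    qed
    define t where "t a = (SOME t. t<mu \<and> (\<forall>k. t \<le> k \<longrightarrow> k < mu \<longrightarrow> drop_defined a (Es k) = drop_defined a (Es t) \<and> drop a (Es k) = drop a (Es t)))" for a
    have t: "t a < mu \<and> (\<forall>k. t a \<le> k \<longrightarrow> k < mu \<longrightarrow> drop_defined a (Es k) = drop_defined a (Es (t a)) \<and> drop a (Es k) = drop a (Es (t a)))" for a
      unfolding t_def by (rule someI_ex) (use tex[of a] in blast)
    have cl: "c d \<lesssim> {..<kap}" using lepoll_of_otp dS(4) by blast
    obtain b where b: "b < mu" "\<forall>a\<in>c d. t a < b"
      using reg_mu[OF mu_def m0(2) kinf cl, of t] t by blast
    obtain b' where b': "b' < mu" "\<forall>x\<in>{..<kap}. b < b'"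
      using reg_mu[OF mu_def m0(2) kinf lepoll_refl, of "\<lambda>_. b"] b(1) by blast
    have bb': "b < b'" using b' kinf by (metis ex_in_conv finite.emptyI lessThan_iff) 
    let ?E0 = "Es b" and ?E1 = "Es b'"
    have E0: "club_in lam ?E0" "?E0 \<subseteq> E'" using Es_club b(1) by auto
    have E1: "club_in lam ?E1" using Es_club b'(1) by auto
    have "Drop (c d) ?E0 \<subseteq> ?E1"
    proof
      fix x assume "x \<in> Drop (c d) ?E0"
      then obtain a where a: "a \<in> c d" "drop_defined a ?E0" "x = drop a ?E0" unfolding Drop_eq by blast
      have ta: "t a \<le> b" "t a \<le> b'" using b(2) a(1) bb' by (auto intro: less_imp_le)
      have "drop_defined a ?E1 = drop_defined a (Es (t a)) \<and> drop a ?E1 = drop a (Es (t a))"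
        using t[of a] ta b'(1) by blast
      moreover have "drop_defined a ?E0 = drop_defined a (Es (t a)) \<and> drop a ?E0 = drop a (Es (t a))"
        using t[of a] ta b(1) by blast
      ultimately have dd: "drop_defined a ?E1" "x = drop a ?E1" using a by auto
      have "a < lam" using a(1) dS(1) dS(3) unfolding club_in_def closed_in_ord_def by auto
      then show "x \<in> ?E1" using drop_in[of lam ?E1 a] E1 dd unfolding club_in_def by blast
    qed
    also have "?E1 \<subseteq> G ?E0" using Es_sub[OF bb'] .
    finally have D1: "Drop (c d) ?E0 \<subseteq> G ?E0" .
    have "Es mu \<subseteq> Es b'" using b'(1) by (intro Es_anti less_imp_le)
    then have dG: "d \<in> G ?E0" using dmu Es_sub[OF bb'] by blast
    have "osup (Drop (c d) ?E0) = d \<and> has_otp (Drop (c d) ?E0) kap"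
      using Drop_acc[OF dacc[of b] dS(3) dS(4) dS(2) dS(5)] b(1) by auto
    then have "?P ?E0 (G ?E0) d" using D1 by blast
    then show False using G[OF E0] d(1) dG by blast
  qed
qed

end
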